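(* Let $\varepsilon>0$, $\alpha$ an ordinal, and $h\in d_\varepsilon^\alpha(B_{\ell_1([0,\omega])})$. Then for every $m\in\mathbb N$, $\tau_m h\in d_\varepsilon^\alpha(B_{\ell_1([0,\omega])})$, where $\tau_m:\ell_1([0,\omega])\to\ell_1([0,\omega])$ is defined by $\tau_m h(n)=h(n-m)$ for $m\le n<\omega$, $\tau_m h(n)=0$ for $n<m$, and $\tau_m h(\omega)=h(\omega)$.
   Context: $[0,\omega]=\{0,1,2,\dots\}\cup\{\omega\}$ with the order topology (a convergent sequence with its limit), and $\ell_1([0,\omega])$ is identified with the dual of $C([0,\omega])$, carrying the corresponding weak$^*$-topology. For a weak$^*$-compact $K\subset X^*$: for $x\in X,t\in\mathbb R$, $H(x,t)=\{x^*: x^*(x)>t\}$; a weak$^*$-slice of $K$ is a nonempty $H(x,t)\cap K$; $d_\varepsilon K$ is $K$ minus the union of all weak$^*$-slices of $K$ of norm diameter $<\varepsilon$; $d_\varepsilon^0K=K$, $d_\varepsilon^{\beta+1}K=d_\varepsilon(d_\varepsilon^\beta K)$, $d_\varepsilon^\beta K=\bigcap_{\mu<\beta}d_\varepsilon^\mu K$ for limit $\beta$. *)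

theory Defs
  imports Complex_Main
begin

text \<open>Points of [0,omega]: Some n is n, None is omega.
  Elements of l1([0,omega]) are functions nat option => real with absolutely
  summable finite part.\<close>

definition is_l1 :: "(nat option \<Rightarrow> real) \<Rightarrow> bool" where
  "is_l1 h \<longleftrightarrow> summable (\<lambda>n. \<bar>h (Some n)\<bar>)"

definition l1norm :: "(nat option \<Rightarrow> real) \<Rightarrow> real" where
  "l1norm h = (\<Sum>n. \<bar>h (Some n)\<bar>) + \<bar>h None\<bar>"

definition l1ball :: "(nat option \<Rightarrow> real) set" where
  "l1ball = {h. is_l1 h \<and> l1norm h \<le> 1}"

text \<open>C([0,omega]): continuous functions on the convergent sequence with its limit.\<close>
definition Cw :: "(nat option \<Rightarrow> real) set" where
  "Cw = {x. (\<lambda>n. x (Some n)) \<longlonglongrightarrow> x None}"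

definition pairing :: "(nat option \<Rightarrow> real) \<Rightarrow> (nat option \<Rightarrow> real) \<Rightarrow> real" where
  "pairing h x = (\<Sum>n. h (Some n) * x (Some n)) + h None * x None"

definition wslice :: "(nat option \<Rightarrow> real) set \<Rightarrow> (nat option \<Rightarrow> real) set \<Rightarrow> bool" where
  "wslice K S \<longleftrightarrow> S \<noteq> {} \<and> (\<exists>x\<in>Cw. \<exists>t::real. S = {h \<in> K. pairing h x > t})"

definition diam_less :: "(nat option \<Rightarrow> real) set \<Rightarrow> real \<Rightarrow> bool" where
  "diam_less S eps \<longleftrightarrow> (\<exists>\<delta><eps. \<forall>f\<in>S. \<forall>g\<in>S. l1norm (\<lambda>i. f i - g i) \<le> \<delta>)"

definition dder :: "real \<Rightarrow> (nat option \<Rightarrow> real) set \<Rightarrow> (nat option \<Rightarrow> real) set" where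
  "dder eps K = K - \<Union>{S. wslice K S \<and> diam_less S eps}"

text \<open>Transfinite iterates, indexed by elements of an arbitrary well-ordered type
  (each element standing for the ordinal of its initial segment).\<close>
definition is_succ_of :: "'o::wellorder \<Rightarrow> 'o \<Rightarrow> bool" where
  "is_succ_of b m \<longleftrightarrow> m < b \<and> (\<forall>v. \<not> (m < v \<and> v < b))"

definition dder_iter :: "real \<Rightarrow> (nat option \<Rightarrow> real) set \<Rightarrow> 'o::wellorder \<Rightarrow> (nat option \<Rightarrow> real) set" where
  "dder_iter eps K = wfrec {(x, y). x < y}
     (\<lambda>D b. if (\<forall>m. \<not> m < b) then K
            else if (\<exists>m. is_succ_of b m) then dder eps (D (THE m. is_succ_of b m))
            else \<Inter>{D m | m. m < b})"

definition tau :: "nat \<Rightarrow> (nat option \<Rightarrow> real) \<Rightarrow> (nat option \<Rightarrow> real)" where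
  "tau m h = (\<lambda>i. case i of None \<Rightarrow> h None
                 | Some n \<Rightarrow> if m \<le> n then h (Some (n - m)) else 0)"

end

theory Submission
  imports Defs
begin

lemma succ_unique:
  fixes b :: "'o::wellorder"
  assumes "is_succ_of b m1" "is_succ_of b m2" shows "m1 = m2"
  using assms unfolding is_succ_of_def by (metis not_less_iff_gr_or_eq)

lemma dder_iter_eq:
  fixes b :: "'o::wellorder"
  shows "dder_iter eps K b = (if (\<forall>m. \<not> m < b) then K
            else if (\<exists>m. is_succ_of b m) then dder eps (dder_iter eps K (THE m. is_succ_of b m))
            else \<Inter>{dder_iter eps K m | m. m < b})"
proof -
  have e: "dder_iter eps K b = (\<lambda>D b. if (\<forall>m. \<not> m < b) then K
            else if (\<exists>m. is_succ_of b m) then dder eps (D (THE m. is_succ_of b m))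
            else \<Inter>{D m | m. m < b}) (cut (dder_iter eps K) {(x, y). x < y} b) b"
    unfolding dder_iter_def by (rule wfrec[OF wellorder_class.wf])
  show ?thesis
  proof (cases "\<forall>m. \<not> m < b")
    case True then show ?thesis using e by simp
  next
    case F: False
    show ?thesis
    proof (cases "\<exists>m. is_succ_of b m")
      case True
      then obtain m0 where m0: "is_succ_of b m0" by blast
      have "(THE m. is_succ_of b m) = m0" using m0 succ_unique by blast
      moreover have "m0 < b" using m0 unfolding is_succ_of_def by simp
      ultimately show ?thesis using e F True by (auto simp: cut_apply)
    next
      case False
      have c: "\<And>m. m < b \<Longrightarrow> cut (dder_iter eps K) {(x, y). x < y} b m = dder_iter eps K m"
        by (simp add: cut_apply)
      have ce: "{cut (dder_iter eps K) {(x, y). x < y} b m | m. m < b} = {dder_iter eps K m | m. m < b}"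
        using c by (smt (verit) Collect_cong)
      show ?thesis by (subst e) (simp only: if_not_P[OF F] if_not_P[OF False] ce)
    qed
  qed
qed

lemma dder_sub: "dder eps D \<subseteq> D" unfolding dder_def by blast

lemma dder_iter_sub:
  fixes b :: "'o::wellorder"
  shows "dder_iter eps K b \<subseteq> K"
proof (induction b rule: less_induct)
  case (less b)
  show ?case
  proof (cases "\<forall>m. \<not> m < b")
    case True then show ?thesis by (subst dder_iter_eq) simp
  next
    case F: False
    show ?thesis
    proof (cases "\<exists>m. is_succ_of b m")
      case True
      then obtain m0 where m0: "is_succ_of b m0" by blast
      have th: "(THE m. is_succ_of b m) = m0" using m0 succ_unique by blast
      have lt: "m0 < b" using m0 unfolding is_succ_of_def by simp
      have "dder_iter eps K b = dder eps (dder_iter eps K m0)"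
        by (subst dder_iter_eq) (simp only: if_not_P[OF F] if_P[OF True] th)
      also have "\<dots> \<subseteq> dder_iter eps K m0" by (rule dder_sub)
      also have "\<dots> \<subseteq> K" using less lt by blast
      finally show ?thesis .
    next
      case False
      then obtain m0 where lt: "m0 < b" using F by blast
      have "dder_iter eps K b = \<Inter>{dder_iter eps K m | m. m < b}"
        by (subst dder_iter_eq) (simp only: if_not_P[OF F] if_not_P[OF False])
      also have "\<dots> \<subseteq> dder_iter eps K m0" using lt by blast
      also have "\<dots> \<subseteq> K" using less lt by blast
      finally show ?thesis .
    qed
  qed
qed

lemma shift_sum:
  fixes c :: "nat \<Rightarrow> real"
  assumes "summable c"
  shows "summable (\<lambda>n. if m \<le> n then c (n - m) else 0)"
    and "(\<Sum>n. if m \<le> n then c (n - m) else 0) = (\<Sum>k. c k)"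
proof -
  let ?a = "\<lambda>n. if m \<le> n then c (n - m) else 0"
  have sh: "(\<lambda>n. ?a (n + m)) = c" by auto
  show s: "summable ?a" using assms sh summable_iff_shift[of ?a m] by simp
  have "suminf ?a = (\<Sum>n. ?a (n + m)) + (\<Sum>i<m. ?a i)"
    by (rule suminf_split_initial_segment[OF s])
  also have "(\<Sum>i<m. ?a i) = 0" by simp
  finally show "suminf ?a = suminf c" using sh by simp
qed

lemma tau_Some: "tau m f (Some n) = (if m \<le> n then f (Some (n - m)) else 0)"
  by (simp add: tau_def)

lemma tau_None: "tau m f None = f None"
  by (simp add: tau_def)

lemma abs_tau: "(\<lambda>n. \<bar>tau m f (Some n)\<bar>) = (\<lambda>n. if m \<le> n then \<bar>f (Some (n - m))\<bar> else 0)"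
  by (auto simp: tau_Some)

lemma is_l1_tau: "is_l1 f \<Longrightarrow> is_l1 (tau m f)"
  unfolding is_l1_def abs_tau
  using shift_sum(1)[of "\<lambda>k. \<bar>f (Some k)\<bar>" m] by simp

lemma l1norm_tau: "is_l1 f \<Longrightarrow> l1norm (tau m f) = l1norm f"
  unfolding l1norm_def abs_tau tau_None is_l1_def
  using shift_sum(2)[of "\<lambda>k. \<bar>f (Some k)\<bar>" m] by simp

lemma tau_ball: "h \<in> l1ball \<Longrightarrow> tau m h \<in> l1ball"
  unfolding l1ball_def using is_l1_tau l1norm_tau by auto

lemma tau_diff: "(\<lambda>i. tau m f i - tau m g i) = tau m (\<lambda>i. f i - g i)"
  by (auto simp: tau_def split: option.split)

lemma is_l1_diff: "is_l1 f \<Longrightarrow> is_l1 g \<Longrightarrow> is_l1 (\<lambda>i. f i - g i)"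
  unfolding is_l1_def
proof -
  assume a: "summable (\<lambda>n. \<bar>f (Some n)\<bar>)" "summable (\<lambda>n. \<bar>g (Some n)\<bar>)"
  have "summable (\<lambda>n. \<bar>f (Some n)\<bar> + \<bar>g (Some n)\<bar>)" using a summable_add by blast
  then show "summable (\<lambda>n. \<bar>f (Some n) - g (Some n)\<bar>)"
    by (rule summable_comparison_test[rotated]) auto
qed

definition Tx :: "nat \<Rightarrow> (nat option \<Rightarrow> real) \<Rightarrow> (nat option \<Rightarrow> real)" where
  "Tx m x = (\<lambda>i. case i of None \<Rightarrow> x None | Some n \<Rightarrow> x (Some (n + m)))"

lemma Tx_Cw: "x \<in> Cw \<Longrightarrow> Tx m x \<in> Cw"
  unfolding Cw_def Tx_def using LIMSEQ_ignore_initial_segment by auto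

lemma pairing_tau:
  assumes g: "is_l1 g" and x: "x \<in> Cw"
  shows "pairing (tau m g) x = pairing g (Tx m x)"
proof -
  have "convergent (\<lambda>n. x (Some n))" using x unfolding Cw_def convergent_def by blast
  then have "Bseq (\<lambda>n. x (Some n))" by (rule convergent_imp_Bseq)
  then obtain B where B: "\<And>n. \<bar>x (Some n)\<bar> \<le> B" unfolding Bseq_def by auto
  let ?c = "\<lambda>k. g (Some k) * x (Some (k + m))"
  have "summable (\<lambda>k. \<bar>g (Some k)\<bar> * B)" using g unfolding is_l1_def by (rule summable_mult2)
  then have sc: "summable ?c"
  proof (rule summable_comparison_test[rotated])
    show "\<exists>N. \<forall>n\<ge>N. norm (?c n) \<le> \<bar>g (Some n)\<bar> * B"
      using B by (auto simp: abs_mult intro!: mult_left_mono)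
  qed
  have eq: "(\<lambda>n. tau m g (Some n) * x (Some n)) = (\<lambda>n. if m \<le> n then ?c (n - m) else 0)"
    by (auto simp: tau_Some)
  show ?thesis unfolding pairing_def eq shift_sum(2)[OF sc]
    by (simp add: Tx_def tau_None)
qed

lemma main:
  fixes b :: "'o::wellorder"
  shows "\<forall>h \<in> dder_iter eps l1ball b. tau m h \<in> dder_iter eps l1ball b"
proof (induction b rule: less_induct)
  case (less b)
  show ?case
  proof (cases "\<forall>m. \<not> m < b")
    case True then show ?thesis by (subst (1 2) dder_iter_eq) (simp add: tau_ball)
  next
    case F: False
    show ?thesis
    proof (cases "\<exists>m. is_succ_of b m")
      case True
      then obtain m0 where m0: "is_succ_of b m0" by blast
      have th: "(THE m. is_succ_of b m) = m0" using m0 succ_unique by blast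
      have "m0 < b" using m0 unfolding is_succ_of_def by simp
      then have IH: "\<forall>h \<in> dder_iter eps l1ball m0. tau m h \<in> dder_iter eps l1ball m0" using less by blast
      define D where "D = dder_iter eps l1ball m0"
      have Dsub: "D \<subseteq> l1ball" unfolding D_def by (rule dder_iter_sub)
      have eqb: "dder_iter eps l1ball b = dder eps D"
        unfolding D_def by (subst dder_iter_eq) (simp only: if_not_P[OF F] if_P[OF True] th)
      show ?thesis unfolding eqb
      proof
        fix h assume h: "h \<in> dder eps D"
        then have hD: "h \<in> D" and hn: "\<And>S. wslice D S \<Longrightarrow> diam_less S eps \<Longrightarrow> h \<notin> S"
          unfolding dder_def by auto
        have thD: "tau m h \<in> D" using IH hD D_def by simp
        show "tau m h \<in> dder eps D"
        proof (rule ccontr)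
          assume "tau m h \<notin> dder eps D"
          then obtain S where S: "wslice D S" "diam_less S eps" "tau m h \<in> S"
            using thD unfolding dder_def by auto
          then obtain x t where x: "x \<in> Cw" and Seq: "S = {g \<in> D. pairing g x > t}"
            unfolding wslice_def by blast
          obtain \<delta> where dl: "\<delta> < eps" and dS: "\<forall>f\<in>S. \<forall>g\<in>S. l1norm (\<lambda>i. f i - g i) \<le> \<delta>"
            using S(2) unfolding diam_less_def by blast
          define S' where "S' = {g \<in> D. pairing g (Tx m x) > t}"
          have l1D: "\<And>g. g \<in> D \<Longrightarrow> is_l1 g" using Dsub unfolding l1ball_def by auto
          have hS': "h \<in> S'" using S(3) Seq hD l1D pairing_tau[OF _ x] unfolding S'_def by auto
          have "wslice D S'" unfolding wslice_def using hS' Tx_Cw[OF x] S'_def by blast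
          moreover have "diam_less S' eps" unfolding diam_less_def
          proof (intro exI conjI ballI)
            show "\<delta> < eps" by (rule dl)
            fix f g assume f: "f \<in> S'" and g: "g \<in> S'"
            have fD: "f \<in> D" "is_l1 f" and gD: "g \<in> D" "is_l1 g" using f g l1D unfolding S'_def by auto
            have "tau m f \<in> S" using f fD IH D_def Seq pairing_tau[OF _ x] unfolding S'_def by auto
            moreover have "tau m g \<in> S" using g gD IH D_def Seq pairing_tau[OF _ x] unfolding S'_def by auto
            ultimately have "l1norm (\<lambda>i. tau m f i - tau m g i) \<le> \<delta>" using dS by blast
            then show "l1norm (\<lambda>i. f i - g i) \<le> \<delta>"
              unfolding tau_diff using l1norm_tau[OF is_l1_diff[OF fD(2) gD(2)]] by simp
          qed
          ultimately show False using hn hS' by blast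
        qed
      qed
    next
      case False
      have eqb: "dder_iter eps l1ball b = \<Inter>{dder_iter eps l1ball m | m. m < b}"
        by (subst dder_iter_eq) (simp only: if_not_P[OF F] if_not_P[OF False])
      show ?thesis unfolding eqb using less by blast
    qed
  qed
qed

theorem mainTheorem6:
  fixes eps :: real and alpha :: "'o::wellorder" and h :: "nat option \<Rightarrow> real"
  assumes "eps > 0"
    and "h \<in> dder_iter eps l1ball alpha"
  shows "\<forall>m::nat. tau m h \<in> dder_iter eps l1ball alpha"
  using main assms(2) by blast

end
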